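(* Fix a positive integer $k$ and let $a_n=\Gamma(k,n)$ for $n\ge 1$. (1) If $k$ is odd, then $(a_n)_{n\ge1}$ is periodic with period $k$, and among $a_1,\ldots,a_k$ the number of $1$'s is one more than the number of $2$'s. (2) If $k$ is even, then $(a_n)_{n\ge1}$ is periodic with period $2k$, and among $a_1,\ldots,a_{2k}$ the number of $1$'s is two more than the number of $2$'s.
   Context: For relatively prime positive integers $p,q$, exactly one of the equations $px+qy=\frac{(p-1)(q-1)}{2}$ (Equation 1) and $px+qy+1=\frac{(p-1)(q-1)}{2}$ (Equation 2) has a solution in nonnegative integers $(x,y)$. For positive integers $a,b$ with $d=\gcd(a,b)$, $\Gamma(a,b)=1$ if Equation 1 with $(p,q)=(a/d,b/d)$ has a nonnegative integer solution, and $\Gamma(a,b)=2$ otherwise. The period of a sequence $(a_n)_{n\ge1}$ is the smallest positive integer $T$ such that $a_n=a_{n+T}$ for all $n\ge 1$. *)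

theory Defs
  imports Main
begin

text \<open>Equation 1 for (p,q): p x + q y = (p-1)(q-1)/2 in nonnegative integers.
  For coprime p, q the right-hand side is an integer, so nat division is exact.\<close>
definition eq1_solvable :: "nat \<Rightarrow> nat \<Rightarrow> bool" where
  "eq1_solvable p q \<longleftrightarrow> (\<exists>x y :: nat. p * x + q * y = (p - 1) * (q - 1) div 2)"

definition Gamma :: "nat \<Rightarrow> nat \<Rightarrow> nat" where
  "Gamma a b = (let d = gcd a b in if eq1_solvable (a div d) (b div d) then 1 else 2)"

definition is_period :: "(nat \<Rightarrow> 'a) \<Rightarrow> nat \<Rightarrow> bool" where
  "is_period a T \<longleftrightarrow> T > 0 \<and> (\<forall>n\<ge>1. a n = a (n + T))"

definition has_least_period :: "(nat \<Rightarrow> 'a) \<Rightarrow> nat \<Rightarrow> bool" where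
  "has_least_period a T \<longleftrightarrow> is_period a T \<and> (\<forall>T'. 0 < T' \<and> T' < T \<longrightarrow> \<not> is_period a T')"

end

theory Submission
  imports Defs
begin

definition PP :: "int \<Rightarrow> int \<Rightarrow> bool" where
  "PP p q \<longleftrightarrow> (\<exists>a b. a > 0 \<and> b > 0 \<and> odd a \<and> odd b \<and> p*a + q*b = p*q + 1)"

lemma sol_bounds:
  fixes p q a b :: int
  assumes "p > 0" "q > 0" "a > 0" "b > 0" "p*a + q*b = p*q + 1"
  shows "a \<le> q \<and> b \<le> p"
proof
  show "a \<le> q"
  proof (rule ccontr)
    assume "\<not> a \<le> q" then have "a \<ge> q + 1" by simp
    then have "p*a \<ge> p*(q+1)" using assms by (simp add: mult_left_mono)
    then have "p*a \<ge> p*q + p" by (simp add: algebra_simps)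
    moreover have "q*b \<ge> q" using mult_left_mono[of 1 b q] assms by simp
    ultimately show False using assms by linarith
  qed
  show "b \<le> p"
  proof (rule ccontr)
    assume "\<not> b \<le> p" then have "b \<ge> p + 1" by simp
    then have "q*b \<ge> q*(p+1)" using assms by (simp add: mult_left_mono)
    then have "q*b \<ge> p*q + q" by (simp add: algebra_simps)
    moreover have "p*a \<ge> p" using mult_left_mono[of 1 a p] assms by simp
    ultimately show False using assms by linarith
  qed
qed

lemma dvd_small_zero:
  fixes q x :: int
  assumes "q dvd x" "\<bar>x\<bar> < q" shows "x = 0"
proof (rule ccontr)
  assume "x \<noteq> 0"
  then have "\<bar>q\<bar> \<le> \<bar>x\<bar>" using dvd_imp_le_int assms(1) by blast
  then show False using assms(2) by linarith
qed

lemma sol_uniq: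
  fixes p q a b a' b' :: int
  assumes "coprime p q" "p > 0" "q > 0" "a > 0" "b > 0" "p*a + q*b = p*q + 1"
    "a' > 0" "b' > 0" "p*a' + q*b' = p*q + 1"
  shows "a = a' \<and> b = b'"
proof -
  have "p*(a - a') = q*(b' - b)" using assms by (simp add: algebra_simps)
  then have "q dvd p*(a-a')" by simp
  then have d: "q dvd (a - a')" using assms(1)
    by (metis coprime_commute coprime_dvd_mult_right_iff)
  have "a \<le> q" "a' \<le> q" using sol_bounds assms by blast+
  then have "\<bar>a - a'\<bar> < q" using assms by auto
  then have "a - a' = 0" using d dvd_small_zero by blast
  then have "a = a'" by simp
  have "p*a + q*b = p*a' + q*b'" using assms(6,9) by simp
  then have "q*b = q*b'" using \<open>a = a'\<close> by simp
  then show ?thesis using \<open>a = a'\<close> assms by simp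
qed

lemma sol_exists:
  fixes p q :: int
  assumes "coprime p q" "p > 0" "q > 0"
  shows "\<exists>a b. a > 0 \<and> b > 0 \<and> p*a + q*b = p*q + 1"
proof -
  obtain u v where uv: "u*p + v*q = 1"
    using assms(1) by (metis bezout_int coprime_iff_gcd_eq_1)
  define b where "b = (v - 1) mod p + 1"
  have m1: "(v - 1) mod p < p" "(v-1) mod p \<ge> 0" using assms by auto
  have b1: "b > 0" "b \<le> p" using m1 unfolding b_def by linarith+
  have "b mod p = v mod p" unfolding b_def by (simp add: mod_add_left_eq)
  then have "p dvd b - v" by (simp add: mod_eq_dvd_iff)
  then obtain t where t: "b - v = p*t" by blast
  have e: "p*q + 1 - q*b = p*(q + u - q*t)" using uv t
    by (simp add: algebra_simps)
  define a where "a = q + u - q*t"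
  have "q*b \<le> q*p" using b1 assms by (intro mult_left_mono) auto
  then have "p*a > 0" using e unfolding a_def by (simp add: algebra_simps)
  then have "a > 0" using assms zero_less_mult_pos by blast
  have "p*a + q*b = p*q + 1" using e unfolding a_def by simp
  then show ?thesis using \<open>a > 0\<close> b1 by blast
qed

lemma PP_char:
  fixes p q a b :: int
  assumes "coprime p q" "p > 0" "q > 0" "a > 0" "b > 0" "p*a + q*b = p*q + 1"
  shows "PP p q \<longleftrightarrow> odd a \<and> odd b"
  using sol_uniq[OF assms] unfolding PP_def using assms by blast

lemma F1:
  fixes p q :: int
  assumes "coprime p q" "p > 0" "q > 0"
  shows "PP p (q + p) \<longleftrightarrow> (if odd p then PP p q else \<not> PP p q)"
proof -
  obtain a b where s: "a > 0" "b > 0" "p*a + q*b = p*q + 1" using sol_exists assms by blast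
  have "b \<le> p" using sol_bounds assms s by blast
  have "gcd p (q + p) = gcd p q" using gcd_add2[of p q] by (simp add: add.commute)
  then have c2: "coprime p (q + p)" using assms(1) by (simp add: coprime_iff_gcd_eq_1)
  have s2: "p*(a+p-b) + (q+p)*b = p*(q+p) + 1" using s by (simp add: algebra_simps)
  have pos: "a+p-b > 0" using \<open>b \<le> p\<close> s by simp
  have e2: "PP p (q+p) \<longleftrightarrow> odd (a+p-b) \<and> odd b"
    by (rule PP_char[OF c2 assms(2) _ pos s(2) s2]) (use assms in simp)
  have e1: "PP p q \<longleftrightarrow> odd a \<and> odd b" using PP_char assms s by blast
  have "even p \<Longrightarrow> odd b"
  proof -
    assume "even p"
    have "odd (p*a + q*b)" using s(3) \<open>even p\<close> by simp
    then show "odd b" using \<open>even p\<close> by simp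
  qed
  then show ?thesis using e1 e2 by auto
qed

lemma F3:
  fixes p q :: int
  assumes "coprime p q" "p > 0" "q > 0" "q < p"
  shows "PP p (p - q) \<longleftrightarrow> (if odd p then \<not> PP p q else PP p q)"
proof -
  obtain a b where s: "a > 0" "b > 0" "p*a + q*b = p*q + 1" using sol_exists assms by blast
  have "b \<le> p" using sol_bounds assms s by blast
  have "b \<noteq> p"
  proof
    assume "b = p"
    then have "p*a = 1" using s by (simp add: algebra_simps)
    then show False using pos_zmult_eq_1_iff[of p a] assms by auto
  qed
  then have "b < p" using \<open>b \<le> p\<close> by simp
  have "gcd (p - q) p = gcd q p" by (rule gcd_diff2)
  then have c2: "coprime p (p - q)" using assms(1)
    by (simp add: coprime_iff_gcd_eq_1 gcd.commute)
  have s2: "p*(a+b-q) + (p-q)*(p-b) = p*(p-q) + 1" using s by (simp add: algebra_simps)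
  have "p*(a+b-q) = 1 + (p-q)*b" using s by (simp add: algebra_simps)
  moreover have "(p-q)*b > 0" using assms s by simp
  ultimately have "p*(a+b-q) > 0" by simp
  then have pos: "a+b-q > 0" using assms zero_less_mult_pos by blast
  have pos2: "p - b > 0" using \<open>b < p\<close> by simp
  have e2: "PP p (p-q) \<longleftrightarrow> odd (a+b-q) \<and> odd (p-b)"
    by (rule PP_char[OF c2 assms(2) _ pos pos2 s2]) (use assms in simp)
  have e1: "PP p q \<longleftrightarrow> odd a \<and> odd b" using PP_char assms s by blast
  have par: "even (p*a + q*b) \<longleftrightarrow> even (p*q + 1)" using s(3) by simp
  have "even p \<Longrightarrow> odd q"
    using assms(1) coprime_common_divisor[of p q 2] by auto
  then show ?thesis using e1 e2 par by auto
qed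


lemma bridge:
  fixes p q :: nat
  assumes "coprime p q" "p > 0" "q > 0"
  shows "eq1_solvable p q \<longleftrightarrow> PP (int p) (int q)"
proof -
  define N where "N = (p - 1) * (q - 1) div 2"
  have ev: "even ((p - 1) * (q - 1))"
  proof (cases "odd p")
    case True then show ?thesis using assms by simp
  next
    case False
    then have "odd q" using assms(1) coprime_common_divisor[of p q 2] by auto
    then show ?thesis using assms by simp
  qed
  then have "2 * N = (p - 1) * (q - 1)" unfolding N_def by simp
  then have "int (2 * N) = int (p - 1) * int (q - 1)" by (metis of_nat_mult)
  moreover have "int (p - 1) = int p - 1" "int (q - 1) = int q - 1" using assms by auto
  ultimately have N2: "2 * int N = (int p - 1) * (int q - 1)" by simp
  show ?thesis
  proof
    assume "eq1_solvable p q"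
    then obtain x y where xy: "p*x + q*y = N" unfolding eq1_solvable_def N_def by blast
    then have "int p * int x + int q * int y = int N" by (metis of_nat_add of_nat_mult)
    then have "int p * (2*int x+1) + int q * (2*int y+1) = int p * int q + 1"
      using N2 by (simp add: algebra_simps)
    then show "PP (int p) (int q)" unfolding PP_def
      by (rule_tac x="2*int x+1" in exI, rule_tac x="2*int y+1" in exI) simp
  next
    assume "PP (int p) (int q)"
    then obtain a b where ab: "a > 0" "b > 0" "odd a" "odd b" "int p * a + int q * b = int p * int q + 1"
      unfolding PP_def by blast
    have ea: "a = 2 * (a div 2) + 1" using ab(3) by presburger
    have eb: "b = 2 * (b div 2) + 1" using ab(4) by presburger
    define x where "x = nat (a div 2)"
    define y where "y = nat (b div 2)"
    have xi: "int x = a div 2" unfolding x_def using ab(1) by simp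
    have yi: "int y = b div 2" unfolding y_def using ab(2) by simp
    have "2 * (int p * int x + int q * int y) = 2 * int N"
    proof -
      have "2 * (int p * int x + int q * int y) = int p * (2 * (a div 2)) + int q * (2 * (b div 2))"
        using xi yi by (simp add: algebra_simps)
      also have "\<dots> = int p * (a - 1) + int q * (b - 1)"
      proof -
        have "2 * (a div 2) = a - 1" "2 * (b div 2) = b - 1" using ea eb by linarith+
        then show ?thesis by simp
      qed
      also have "\<dots> = (int p - 1) * (int q - 1)" using ab(5) by (simp add: algebra_simps)
      finally show ?thesis using N2 by simp
    qed
    then have "int (p*x + q*y) = int N" by simp
    then have "p*x + q*y = N" by (simp only: of_nat_eq_iff)
    then show "eq1_solvable p q" unfolding eq1_solvable_def N_def by blast
  qed
qed

lemma Gamma_PP: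
  fixes k n :: nat
  assumes "k > 0" "n > 0"
  shows "Gamma k n = (if PP (int (k div gcd k n)) (int (n div gcd k n)) then 1 else 2)"
proof -
  let ?d = "gcd k n"
  have d: "?d > 0" using assms by simp
  have c: "coprime (k div ?d) (n div ?d)" using d by (simp add: div_gcd_coprime)
  have p: "k div ?d > 0" using assms d by (simp add: div_greater_zero_iff)
  have q: "n div ?d > 0" using assms d by (simp add: div_greater_zero_iff)
  show ?thesis unfolding Gamma_def Let_def using bridge[OF c p q] by simp
qed

lemma Gval: "Gamma k n = 1 \<or> Gamma k n = 2"
  by (simp add: Gamma_def Let_def)

lemma pq_facts:
  fixes k n :: nat
  assumes "k > 0" "n > 0"
  shows "coprime (int (k div gcd k n)) (int (n div gcd k n))"
    "int (k div gcd k n) > 0" "int (n div gcd k n) > 0"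
proof -
  let ?d = "gcd k n"
  have d: "?d > 0" using assms by simp
  show "coprime (int (k div ?d)) (int (n div ?d))" using d by (simp add: div_gcd_coprime)
  show "int (k div ?d) > 0" using assms d by (simp add: div_greater_zero_iff)
  show "int (n div ?d) > 0" using assms d by (simp add: div_greater_zero_iff)
qed

lemma L1:
  fixes k n :: nat
  assumes "k > 0" "n > 0"
  shows "Gamma k (n + k) = (if odd (k div gcd k n) then Gamma k n else 3 - Gamma k n)"
proof -
  let ?d = "gcd k n"
  have g: "gcd k (n + k) = ?d" using gcd_add2[of k n] by (simp add: add.commute)
  have dv: "(n + k) div ?d = n div ?d + k div ?d" by simp
  have "Gamma k (n + k) = (if PP (int (k div ?d)) (int (n div ?d) + int (k div ?d)) then 1 else 2)"
    using Gamma_PP[of k "n+k"] assms g dv by simp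
  also have "\<dots> = (if (if odd (int (k div ?d)) then PP (int (k div ?d)) (int (n div ?d))
       else \<not> PP (int (k div ?d)) (int (n div ?d))) then 1 else 2)"
    using F1[OF pq_facts[OF assms]] by simp
  finally show ?thesis using Gamma_PP[OF assms] by auto
qed

lemma div_diff_int:
  fixes m n d :: nat
  assumes "d dvd m" "d dvd n" "n \<le> m"
  shows "int ((m - n) div d) = int (m div d) - int (n div d)"
proof -
  obtain m' where m: "m = d * m'" using assms(1) by blast
  obtain n' where n: "n = d * n'" using assms(2) by blast
  show ?thesis
  proof (cases "d = 0")
    case True then show ?thesis by simp
  next
    case False
    then have "n' \<le> m'" using assms(3) m n by simp
    moreover have "m - n = d * (m' - n')" using m n by (simp add: diff_mult_distrib2)
    ultimately show ?thesis using m n False by simp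
  qed
qed

lemma L2:
  fixes k n :: nat
  assumes "k > 0" "n > 0" "n < k"
  shows "Gamma k (k - n) = (if odd (k div gcd k n) then 3 - Gamma k n else Gamma k n)"
proof -
  let ?d = "gcd k n"
  have g: "gcd k (k - n) = ?d" using gcd_diff2_nat[of n k] assms by (simp add: gcd.commute)
  have dv: "int ((k - n) div ?d) = int (k div ?d) - int (n div ?d)"
    using div_diff_int[of ?d k n] assms by simp
  have lt: "int (n div ?d) < int (k div ?d)"
  proof -
    have "?d * (n div ?d) = n" "?d * (k div ?d) = k" by simp_all
    then have "?d * (n div ?d) < ?d * (k div ?d)" using assms by simp
    then show ?thesis by (simp only: mult_less_cancel1) simp
  qed
  have "Gamma k (k - n) = (if PP (int (k div ?d)) (int (k div ?d) - int (n div ?d)) then 1 else 2)"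
    using Gamma_PP[of k "k - n"] assms g dv by simp
  also have "\<dots> = (if (if odd (int (k div ?d)) then \<not> PP (int (k div ?d)) (int (n div ?d))
       else PP (int (k div ?d)) (int (n div ?d))) then 1 else 2)"
    using F3[OF pq_facts[OF assms(1,2)] lt] by simp
  finally show ?thesis using Gamma_PP[OF assms(1,2)] by auto
qed

lemma Gdiv:
  fixes k n :: nat
  assumes "k > 0" "n dvd k"
  shows "Gamma k n = 1"
proof -
  have n: "n > 0" using assms by (cases "n = 0") auto
  have g: "gcd k n = n" using assms(2) by (simp add: gcd.commute gcd_nat.absorb1)
  have "PP (int (k div n)) 1" unfolding PP_def
    by (rule exI[of _ 1], rule exI[of _ 1]) simp
  then show ?thesis using Gamma_PP[OF assms(1) n] g n by simp
qed


lemma per_mult: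
  assumes "is_period a T" "n \<ge> 1"
  shows "a n = a (n + m * T)"
proof (induction m)
  case 0 then show ?case by simp
next
  case (Suc m)
  have "n + m*T \<ge> 1" using assms(2) by simp
  moreover have "\<forall>n\<ge>1. a n = a (n + T)" using assms(1) unfolding is_period_def by blast
  ultimately have h: "a (n + m*T) = a (n + m*T + T)" by blast
  have e: "n + Suc m * T = n + m*T + T" by simp
  show ?case unfolding e using Suc.IH h by (rule trans)
qed

lemma per_gcd:
  assumes "is_period a T" "is_period a S"
  shows "is_period a (gcd T S)"
proof -
  have T: "T > 0" using assms(1) unfolding is_period_def by simp
  obtain x y where xy: "T * x = S * y + gcd T S" using bezout_nat[of T S] T by auto
  have P: "a n = a (n + gcd T S)" if "n \<ge> 1" for n
  proof -
    have "n + gcd T S \<ge> 1" using that by simp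
    from per_mult[OF assms(2) this, of y] have "a (n + gcd T S) = a (n + gcd T S + y * S)" .
    also have "n + gcd T S + y * S = n + x * T" using xy by (simp add: mult.commute)
    also have "a (n + x * T) = a n" using per_mult[OF assms(1) that, of x] by (rule sym)
    finally show ?thesis by simp
  qed
  have "gcd T S > 0" using T by simp
  then show ?thesis unfolding is_period_def using P by blast
qed

lemma per_dvd:
  assumes "is_period a T" "T dvd S" "S > 0"
  shows "is_period a S"
proof -
  obtain m where S: "S = T * m" using assms(2) by blast
  have "a n = a (n + S)" if "n \<ge> 1" for n
    using per_mult[OF assms(1) that, of m] S by (metis mult.commute)
  then show ?thesis unfolding is_period_def using assms(3) by blast
qed

lemma odd_div:
  assumes "odd (k::nat)" "d dvd k" shows "odd (k div d)"
proof -
  have "odd (d * (k div d))" using assms by simp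
  then show ?thesis by simp
qed


lemma Gflip2:
  fixes k n :: nat
  assumes "k > 0" "n > 0" "n < 2*k" "n \<noteq> k"
  shows "Gamma k (2*k - n) = 3 - Gamma k n"
proof (cases "n < k")
  case True
  define m where "m = k - n"
  have m: "m > 0" "m < k" using True assms unfolding m_def by auto
  have g: "gcd k m = gcd k n" using gcd_diff2_nat[of n k] True unfolding m_def by (simp add: gcd.commute)
  have e: "2*k - n = m + k" unfolding m_def using True by simp
  have A: "Gamma k (m + k) = (if odd (k div gcd k n) then Gamma k m else 3 - Gamma k m)"
    using L1[OF assms(1) m(1)] g by simp
  have B: "Gamma k m = (if odd (k div gcd k n) then 3 - Gamma k n else Gamma k n)"
    using L2[OF assms(1) assms(2) True] unfolding m_def .
  show ?thesis unfolding e using A B Gval[of k n] by auto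
next
  case False
  then have nk: "n > k" using assms(4) by simp
  define m where "m = n - k"
  have m: "m > 0" "m < k" using nk assms unfolding m_def by auto
  have g: "gcd k m = gcd k n" using gcd_diff1_nat[of k n] nk unfolding m_def
    by (metis gcd.commute gcd_diff2_nat less_imp_le)
  have e1: "n = m + k" unfolding m_def using nk by simp
  have e2: "2*k - n = k - m" unfolding m_def using nk by simp
  have A: "Gamma k n = (if odd (k div gcd k n) then Gamma k m else 3 - Gamma k m)"
    using L1[OF assms(1) m(1)] g e1 by simp
  have B: "Gamma k (k - m) = (if odd (k div gcd k n) then 3 - Gamma k m else Gamma k m)"
    using L2[OF assms(1) m] g by simp
  show ?thesis unfolding e2 using A B Gval[of k m] by auto
qed


lemma odd_case:
  fixes k :: nat
  assumes "k > 0" "odd k"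
  shows "has_least_period (\<lambda>n. Gamma k n) k \<and>
            card {n \<in> {1..k}. Gamma k n = 1} = card {n \<in> {1..k}. Gamma k n = 2} + 1"
proof -
  have flip: "Gamma k (k - n) = 3 - Gamma k n" if "n > 0" "n < k" for n
    using L2[OF assms(1) that] odd_div[OF assms(2), of "gcd k n"] by simp
  have per: "is_period (\<lambda>n. Gamma k n) k"
  proof -
    have "Gamma k n = Gamma k (n + k)" if "n \<ge> 1" for n
      using L1[OF assms(1), of n] odd_div[OF assms(2), of "gcd k n"] that by simp
    then show ?thesis unfolding is_period_def using assms(1) by blast
  qed
  have least: "\<not> is_period (\<lambda>n. Gamma k n) T" if "0 < T" "T < k" for T
  proof
    assume pT: "is_period (\<lambda>n. Gamma k n) T"
    define g where "g = gcd T k"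
    have pg: "is_period (\<lambda>n. Gamma k n) g" unfolding g_def using per_gcd[OF pT per] .
    have g0: "g > 0" "g dvd k" "g < k" unfolding g_def
    proof -
      show "gcd T k > 0" using that by simp
      show "gcd T k dvd k" by simp
      have "gcd T k \<le> T" using gcd_le1_nat[of T k] that(1) by simp
      then show "gcd T k < k" using that(2) by simp
    qed
    have gk: "gcd k g = g" using g0(2) by (simp add: gcd.commute gcd_nat.absorb1)
    have G1: "Gamma k g = 1" using Gdiv[OF assms(1) g0(2)] .
    have "Gamma k (k - g) = 3 - Gamma k g" using flip g0 by simp
    then have G2: "Gamma k (k - g) = 2" using G1 by simp
    have "\<forall>n\<ge>1. Gamma k n = Gamma k (n + g)" using pg unfolding is_period_def by blast
    moreover have "k - g \<ge> 1" using g0 by simp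
    ultimately have "Gamma k (k - g) = Gamma k (k - g + g)" by blast
    also have "k - g + g = k" using g0 by simp
    also have "Gamma k k = 1" using Gdiv[OF assms(1)] by simp
    finally show False using G2 by simp
  qed
  define B1 where "B1 = {n \<in> {1..<k}. Gamma k n = 1}"
  define B2 where "B2 = {n \<in> {1..<k}. Gamma k n = 2}"
  have Gk: "Gamma k k = 1" using Gdiv[OF assms(1)] by simp
  have A1: "{n \<in> {1..k}. Gamma k n = 1} = insert k B1" unfolding B1_def using Gk assms(1) by auto
  have A2: "{n \<in> {1..k}. Gamma k n = 2} = B2"
  proof (rule set_eqI)
    fix x show "x \<in> {n \<in> {1..k}. Gamma k n = 2} \<longleftrightarrow> x \<in> B2"
      using Gk by (cases "x = k") (auto simp: B2_def)
  qed
  have bij: "bij_betw (\<lambda>n. k - n) B1 B2"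
  proof (rule bij_betw_byWitness[where f'="\<lambda>n. k - n"])
    show "\<forall>a\<in>B1. k - (k - a) = a" unfolding B1_def by auto
    show "\<forall>a\<in>B2. k - (k - a) = a" unfolding B2_def by auto
    show "(\<lambda>n. k - n) ` B1 \<subseteq> B2"
    proof
      fix x assume "x \<in> (\<lambda>n. k - n) ` B1"
      then obtain n where n: "n \<in> B1" "x = k - n" by blast
      then have "n > 0" "n < k" "Gamma k n = 1" unfolding B1_def by auto
      then show "x \<in> B2" using flip[of n] n(2) unfolding B2_def by auto
    qed
    show "(\<lambda>n. k - n) ` B2 \<subseteq> B1"
    proof
      fix x assume "x \<in> (\<lambda>n. k - n) ` B2"
      then obtain n where n: "n \<in> B2" "x = k - n" by blast
      then have "n > 0" "n < k" "Gamma k n = 2" unfolding B2_def by auto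
      then show "x \<in> B1" using flip[of n] n(2) unfolding B1_def by auto
    qed
  qed
  have "card B1 = card B2" using bij_betw_same_card[OF bij] .
  moreover have "card (insert k B1) = card B1 + 1" unfolding B1_def by simp
  ultimately have "card {n \<in> {1..k}. Gamma k n = 1} = card {n \<in> {1..k}. Gamma k n = 2} + 1"
    using A1 A2 by simp
  then show ?thesis using per least unfolding has_least_period_def by blast
qed


lemma odd_dvd_double:
  fixes g k :: nat
  assumes "odd g" "g dvd 2*k" shows "g dvd k"
proof -
  obtain c where c: "2*k = g*c" using assms(2) by blast
  have "even (2*k)" by simp
  then have "even (g*c)" using c by simp
  then have "even c" using assms(1) by simp
  then obtain c' where "c = 2*c'" by blast
  then have "k = g*c'" using c by simp
  then show ?thesis by simp
qed

lemma even_case: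
  fixes k :: nat
  assumes "k > 0" "even k"
  shows "has_least_period (\<lambda>n. Gamma k n) (2*k) \<and>
            card {n \<in> {1..2*k}. Gamma k n = 1} = card {n \<in> {1..2*k}. Gamma k n = 2} + 2"
proof -
  have per: "is_period (\<lambda>n. Gamma k n) (2*k)"
  proof -
    have "Gamma k n = Gamma k (n + 2*k)" if "n \<ge> 1" for n
    proof -
      have g: "gcd k (n + k) = gcd k n" using gcd_add2[of k n] by (simp add: add.commute)
      have A: "Gamma k (n + k) = (if odd (k div gcd k n) then Gamma k n else 3 - Gamma k n)"
        using L1[OF assms(1), of n] that by simp
      have B: "Gamma k (n + k + k) = (if odd (k div gcd k n) then Gamma k (n+k) else 3 - Gamma k (n+k))"
        using L1[OF assms(1), of "n+k"] that g by simp
      have e: "n + 2*k = n + k + k" by simp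
      show ?thesis unfolding e using A B Gval[of k n] by auto
    qed
    moreover have "2*k > 0" using assms(1) by simp
    ultimately show ?thesis unfolding is_period_def by blast
  qed
  have least: "\<not> is_period (\<lambda>n. Gamma k n) T" if "0 < T" "T < 2*k" for T
  proof
    assume pT: "is_period (\<lambda>n. Gamma k n) T"
    define g where "g = gcd T (2*k)"
    have pg: "is_period (\<lambda>n. Gamma k n) g" unfolding g_def using per_gcd[OF pT per] .
    have g0: "g > 0" "g dvd 2*k" "g < 2*k" unfolding g_def
    proof -
      show "gcd T (2*k) > 0" using that by simp
      show "gcd T (2*k) dvd 2*k" by simp
      have "gcd T (2*k) \<le> T" using gcd_le1_nat[of T "2*k"] that(1) by simp
      then show "gcd T (2*k) < 2*k" using that(2) by simp
    qed
    have pgall: "\<forall>n\<ge>1. Gamma k n = Gamma k (n + g)" using pg unfolding is_period_def by blast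
    show False
    proof (cases "g dvd k")
      case True
      have pk: "is_period (\<lambda>n. Gamma k n) k" using per_dvd[OF pg True assms(1)] .
      then have "\<forall>n\<ge>1. Gamma k n = Gamma k (n + k)" unfolding is_period_def by blast
      then have e: "Gamma k 1 = Gamma k (1 + k)" by blast
      have "Gamma k (1 + k) = 3 - Gamma k 1" using L1[OF assms(1), of 1] assms(2) by simp
      moreover have "Gamma k 1 = 1" using Gdiv[OF assms(1)] by simp
      ultimately show False using e by simp
    next
      case False
      have "even g" using False odd_dvd_double g0(2) by blast
      then obtain h where h: "g = 2*h" by blast
      have h0: "h > 0" using g0 h by simp
      have hk: "h dvd k" using g0(2) h by simp
      define r where "r = k div h"
      have kr: "k = h * r" unfolding r_def using hk by simp
      have "odd r"
      proof
        assume "even r"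
        then obtain r' where "r = 2*r'" by blast
        then have "k = g * r'" using kr h by simp
        then show False using False by simp
      qed
      have "r \<noteq> 1"
      proof
        assume "r = 1" then have "g = 2*k" using kr h by simp
        then show False using g0 by simp
      qed
      then have "r \<ge> 3" using \<open>odd r\<close> by presburger
      then have "h * 1 < h * r" using h0 by (intro mult_strict_left_mono) auto
      then have hlt: "h < k" using kr by simp
      have gk: "gcd k h = h" using hk by (simp add: gcd.commute gcd_nat.absorb1)
      have Gh: "Gamma k h = 1" using Gdiv[OF assms(1) hk] .
      have "Gamma k (k - h) = 3 - Gamma k h"
        using L2[OF assms(1) h0 hlt] gk \<open>odd r\<close> unfolding r_def by simp
      then have G2: "Gamma k (k - h) = 2" using Gh by simp
      have "Gamma k (h + k) = Gamma k h"
        using L1[OF assms(1) h0] gk \<open>odd r\<close> unfolding r_def by simp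
      then have G1: "Gamma k (h + k) = 1" using Gh by simp
      have "k - h \<ge> 1" using hlt by simp
      then have "Gamma k (k - h) = Gamma k (k - h + g)" using pgall by blast
      also have "k - h + g = h + k" using h hlt by simp
      finally show False using G1 G2 by simp
    qed
  qed
  define C where "C = {1..<2*k} - {k}"
  define B1 where "B1 = {n \<in> C. Gamma k n = 1}"
  define B2 where "B2 = {n \<in> C. Gamma k n = 2}"
  have Gk: "Gamma k k = 1" using Gdiv[OF assms(1)] by simp
  have G2k: "Gamma k (2*k) = 1"
  proof -
    have "gcd k (2*k) = k" by simp
    moreover have "PP 1 2" unfolding PP_def by (rule exI[of _ 1], rule exI[of _ 1]) simp
    ultimately show ?thesis using Gamma_PP[of k "2*k"] assms(1) by simp
  qed
  have A1: "{n \<in> {1..2*k}. Gamma k n = 1} = insert k (insert (2*k) B1)"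
  proof (rule set_eqI)
    fix x show "x \<in> {n \<in> {1..2*k}. Gamma k n = 1} \<longleftrightarrow> x \<in> insert k (insert (2*k) B1)"
      using Gk G2k assms(1) by (cases "x = k"; cases "x = 2*k") (auto simp: B1_def C_def)
  qed
  have A2: "{n \<in> {1..2*k}. Gamma k n = 2} = B2"
  proof (rule set_eqI)
    fix x show "x \<in> {n \<in> {1..2*k}. Gamma k n = 2} \<longleftrightarrow> x \<in> B2"
      using Gk G2k by (cases "x = k"; cases "x = 2*k") (auto simp: B2_def C_def)
  qed
  have flipC: "Gamma k (2*k - n) = 3 - Gamma k n" "2*k - n \<in> C" if "n \<in> C" for n
  proof -
    have n: "n > 0" "n < 2*k" "n \<noteq> k" using that unfolding C_def by auto
    show "Gamma k (2*k - n) = 3 - Gamma k n" using Gflip2[OF assms(1) n] .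
    show "2*k - n \<in> C" using n unfolding C_def by auto
  qed
  have bij: "bij_betw (\<lambda>n. 2*k - n) B1 B2"
  proof (rule bij_betw_byWitness[where f'="\<lambda>n. 2*k - n"])
    show "\<forall>a\<in>B1. 2*k - (2*k - a) = a" unfolding B1_def C_def by auto
    show "\<forall>a\<in>B2. 2*k - (2*k - a) = a" unfolding B2_def C_def by auto
    show "(\<lambda>n. 2*k - n) ` B1 \<subseteq> B2"
    proof
      fix x assume "x \<in> (\<lambda>n. 2*k - n) ` B1"
      then obtain n where n: "n \<in> B1" "x = 2*k - n" by blast
      then have "n \<in> C" "Gamma k n = 1" unfolding B1_def by auto
      then show "x \<in> B2" using flipC[of n] n(2) unfolding B2_def by auto
    qed
    show "(\<lambda>n. 2*k - n) ` B2 \<subseteq> B1"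
    proof
      fix x assume "x \<in> (\<lambda>n. 2*k - n) ` B2"
      then obtain n where n: "n \<in> B2" "x = 2*k - n" by blast
      then have "n \<in> C" "Gamma k n = 2" unfolding B2_def by auto
      then show "x \<in> B1" using flipC[of n] n(2) unfolding B1_def by auto
    qed
  qed
  have "card B1 = card B2" using bij_betw_same_card[OF bij] .
  moreover have "card (insert k (insert (2*k) B1)) = card B1 + 2"
  proof -
    have f: "finite B1" unfolding B1_def C_def by simp
    have "k \<notin> B1" "2*k \<notin> B1" unfolding B1_def C_def by auto
    moreover have "k \<noteq> 2*k" using assms(1) by simp
    ultimately show ?thesis using f by simp
  qed
  ultimately have "card {n \<in> {1..2*k}. Gamma k n = 1} = card {n \<in> {1..2*k}. Gamma k n = 2} + 2"
    using A1 A2 by simp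
  then show ?thesis using per least unfolding has_least_period_def by blast
qed

theorem theorem1p8:
  fixes k :: nat
  assumes "k > 0"
  shows "(odd k \<longrightarrow> has_least_period (\<lambda>n. Gamma k n) k \<and>
            card {n \<in> {1..k}. Gamma k n = 1} = card {n \<in> {1..k}. Gamma k n = 2} + 1)
       \<and> (even k \<longrightarrow> has_least_period (\<lambda>n. Gamma k n) (2 * k) \<and>
            card {n \<in> {1..2 * k}. Gamma k n = 1} = card {n \<in> {1..2 * k}. Gamma k n = 2} + 2)"
  using odd_case[OF assms] even_case[OF assms] by blast

end
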